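(* Let $A$ be a non-negative $d\times d$ matrix and $M=(I-A^T)(I-A)$. Let $X$ be an entrywise strictly positive $d\times d$ matrix with $\rho(X)=1$. Let $\mathbf u,\mathbf v$ be its left and right leading eigenvectors, normalized by $\|\mathbf u\|=\|\mathbf v\|=1$. Suppose there is $r>0$ with $A=X+r\,\mathbf u\,\mathbf v^T$ (i.e. $X$ is a positive stationary point of problem (P)). Then $M\mathbf v=r^2\mathbf v$; thus $\mathbf v$ is an eigenvector of $M$, and $$X=A-(A-I)\mathbf v\,\mathbf v^T .$$
   Context: $\rho(\cdot)$ denotes spectral radius and $\|\cdot\|$ the Euclidean norm. Left and right leading eigenvectors satisfy $\mathbf u^TX=\mathbf u^T$ and $X\mathbf v=\mathbf v$; they are positive since $X>0$. Problem (P) is: minimize the Frobenius distance $\|X-A\|$ over non-negative $X$ with $\rho(X)\le1$. *)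

theory Defs
  imports "HOL-Analysis.Analysis"
begin

definition cmat :: "real^'n^'n \<Rightarrow> complex^'n^'n" where
  "cmat X = (\<chi> i j. complex_of_real (X $ i $ j))"

definition spectral_radius :: "real^'n^'n \<Rightarrow> real" where
  "spectral_radius X =
     Sup {cmod l | l. \<exists>w::complex^'n. w \<noteq> 0 \<and> cmat X *v w = l *s w}"

definition outer :: "real^'n \<Rightarrow> real^'n \<Rightarrow> real^'n^'n" where
  "outer u v = (\<chi> i j. u $ i * v $ j)"

end

theory Submission
  imports Defs
begin

lemma outer_mult: "outer u v *v w = (v \<bullet> w) *\<^sub>R u"
  by (simp add: outer_def matrix_vector_mult_def vec_eq_iff inner_vec_def sum_distrib_left mult_ac)

lemma transpose_outer: "transpose (outer u v) = outer v u"
  by (simp add: outer_def transpose_def vec_eq_iff)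

lemma mat_outer: "B ** outer v w = outer (B *v v) w"
  by (simp add: outer_def matrix_matrix_mult_def matrix_vector_mult_def vec_eq_iff sum_distrib_right sum_distrib_left mult_ac)

lemma transpose_add': "transpose (B + C) = transpose B + transpose (C::real^'n^'n)"
  by (simp add: transpose_def vec_eq_iff)

lemma mv_scale: "(B::real^'n^'n) *v (c *\<^sub>R w) = c *\<^sub>R (B *v w)"
  by (simp add: vec_eq_iff matrix_vector_mult_def sum_distrib_left mult_ac)

theorem corollary2:
  fixes A X :: "real^'n^'n" and u v :: "real^'n" and r :: real
  assumes A_nonneg: "\<forall>i j. A $ i $ j \<ge> 0"
    and X_pos: "\<forall>i j. X $ i $ j > 0"
    and rho: "spectral_radius X = 1"
    and u_left: "u v* X = u" and u_pos: "\<forall>i. u $ i > 0" and u_norm: "norm u = 1"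
    and v_right: "X *v v = v" and v_pos: "\<forall>i. v $ i > 0" and v_norm: "norm v = 1"
    and r_pos: "r > 0"
    and A_eq: "A = X + r *\<^sub>R outer u v"
  shows "((mat 1 - transpose A) ** (mat 1 - A)) *v v = r\<^sup>2 *\<^sub>R v
         \<and> X = A - (A - mat 1) ** outer v v"
proof -
  have vv: "v \<bullet> v = 1" using v_norm by (simp add: dot_square_norm)
  have uu: "u \<bullet> u = 1" using u_norm by (simp add: dot_square_norm)
  have Xt: "transpose X *v u = u" using u_left by simp
  have Av: "A *v v = v + r *\<^sub>R u"
    using A_eq v_right vv by (simp add: matrix_vector_mult_add_rdistrib scaleR_matrix_vector_assoc[symmetric] outer_mult)
  have At: "transpose A *v u = u + r *\<^sub>R v"
    using A_eq Xt uu by (simp del: transpose_matrix_vector add: transpose_add' transpose_scalar matrix_vector_mult_add_rdistrib scaleR_matrix_vector_assoc[symmetric] outer_mult transpose_outer)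
  have 1: "(mat 1 - A) *v v = - r *\<^sub>R u"
    using Av by (simp add: matrix_vector_mult_diff_rdistrib)
  have "((mat 1 - transpose A) ** (mat 1 - A)) *v v = (mat 1 - transpose A) *v (- r *\<^sub>R u)"
    by (simp add: matrix_vector_mul_assoc[symmetric] 1)
  also have "\<dots> = (- r *\<^sub>R u) - (- r) *\<^sub>R (transpose A *v u)"
    by (simp only: matrix_vector_mult_diff_rdistrib matrix_vector_mul_lid mv_scale scaleR_diff_right)
  also have "\<dots> = r\<^sup>2 *\<^sub>R v"
    using At by (simp del: transpose_matrix_vector add: algebra_simps power2_eq_square)
  finally have P1: "((mat 1 - transpose A) ** (mat 1 - A)) *v v = r\<^sup>2 *\<^sub>R v" .
  have "(A - mat 1) ** outer v v = outer (r *\<^sub>R u) v"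
    using Av by (simp add: mat_outer matrix_vector_mult_diff_rdistrib)
  also have "\<dots> = r *\<^sub>R outer u v" by (simp add: outer_def vec_eq_iff)
  finally show ?thesis using P1 A_eq by simp
qed

end
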